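(* There exist constants $c,C>0$ and infinitely many $n\in\mathbb{N}$ such that for each of them there is a connected graph $G$ on $n$ vertices of maximum degree $3$, vertices $a,b\in V(G)$, and a set $\mathcal{X}\subseteq V(G)$ with $|\mathcal{X}|\le C\sqrt{n}$ such that, in the geodesic-biased random walk on $G$ with target $b$ and excited set $\mathcal{X}$, started at $a$ (for any choice of the fixed shortest paths), \[\mathbb{E}[\tau_a(b,\mathcal{X})]\ \ge\ c\,\exp\left(\frac{\sqrt[4]{n}}{100}\right).\]
   Context: Geodesic-biased random walk: let $G$ be a finite connected graph, $b\in V(G)$ a target vertex and $\mathcal{X}\subseteq V(G)$ a set of excited vertices. For every vertex $x\neq b$ fix in advance one shortest path (geodesic) in $G$ from $x$ to $b$. A walker moves in discrete time: from an unexcited vertex ($x\notin\mathcal{X}$) she moves to a uniformly random neighbour of $x$; from an excited vertex ($x\in\mathcal{X}$) she moves deterministically to the next vertex on the fixed shortest path from $x$ to $b$. $\tau_a(b,\mathcal{X})$ denotes the first time the walker started at $a$ visits $b$. *)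

theory Defs
  imports "HOL-Analysis.Analysis"
begin

definition simple_graph :: "nat \<Rightarrow> (nat \<Rightarrow> nat \<Rightarrow> bool) \<Rightarrow> bool" where
  "simple_graph n E \<longleftrightarrow> (\<forall>x y. E x y \<longrightarrow> x < n \<and> y < n \<and> x \<noteq> y \<and> E y x)"

definition deg :: "nat \<Rightarrow> (nat \<Rightarrow> nat \<Rightarrow> bool) \<Rightarrow> nat \<Rightarrow> nat" where
  "deg n E x = card {y \<in> {..<n}. E x y}"

definition is_walk :: "(nat \<Rightarrow> nat \<Rightarrow> bool) \<Rightarrow> nat list \<Rightarrow> bool" where
  "is_walk E p \<longleftrightarrow> p \<noteq> [] \<and> (\<forall>i. Suc i < length p \<longrightarrow> E (p ! i) (p ! Suc i))"

definition connected_graph :: "nat \<Rightarrow> (nat \<Rightarrow> nat \<Rightarrow> bool) \<Rightarrow> bool" where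
  "connected_graph n E \<longleftrightarrow> 0 < n \<and>
     (\<forall>x<n. \<forall>y<n. \<exists>p. is_walk E p \<and> hd p = x \<and> last p = y)"

definition gdist :: "(nat \<Rightarrow> nat \<Rightarrow> bool) \<Rightarrow> nat \<Rightarrow> nat \<Rightarrow> nat" where
  "gdist E x y = (LEAST k. \<exists>p. is_walk E p \<and> hd p = x \<and> last p = y \<and> length p = Suc k)"

definition is_geodesic :: "(nat \<Rightarrow> nat \<Rightarrow> bool) \<Rightarrow> nat \<Rightarrow> nat \<Rightarrow> nat list \<Rightarrow> bool" where
  "is_geodesic E x b p \<longleftrightarrow> is_walk E p \<and> hd p = x \<and> last p = b \<and> length p = Suc (gdist E x b)"

definition gb_trans :: "nat \<Rightarrow> (nat \<Rightarrow> nat \<Rightarrow> bool) \<Rightarrow> nat set \<Rightarrow> (nat \<Rightarrow> nat list)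
    \<Rightarrow> nat \<Rightarrow> nat \<Rightarrow> real" where
  "gb_trans n E X geo x y =
     (if x \<in> X then (if y = geo x ! 1 then 1 else 0)
      else (if E x y then 1 / real (deg n E x) else 0))"

text \<open>surv t y = probability that the walk started at a is at y at time t and has not
visited b at any time 0..t.\<close>
fun gb_surv :: "nat \<Rightarrow> (nat \<Rightarrow> nat \<Rightarrow> bool) \<Rightarrow> nat set \<Rightarrow> (nat \<Rightarrow> nat list)
    \<Rightarrow> nat \<Rightarrow> nat \<Rightarrow> nat \<Rightarrow> nat \<Rightarrow> real" where
  "gb_surv n E X geo a b 0 y = (if y = a \<and> y \<noteq> b then 1 else 0)"
| "gb_surv n E X geo a b (Suc t) y =
     (if y = b then 0 else
        (\<Sum>x\<in>{..<n} - {b}. gb_surv n E X geo a b t x * gb_trans n E X geo x y))"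

text \<open>P(tau_a(b,X) > t).\<close>
definition gb_tail :: "nat \<Rightarrow> (nat \<Rightarrow> nat \<Rightarrow> bool) \<Rightarrow> nat set \<Rightarrow> (nat \<Rightarrow> nat list)
    \<Rightarrow> nat \<Rightarrow> nat \<Rightarrow> nat \<Rightarrow> real" where
  "gb_tail n E X geo a b t = (\<Sum>y\<in>{..<n} - {b}. gb_surv n E X geo a b t y)"

text \<open>E[tau_a(b,X)] = sum over t of P(tau > t), as an extended nonnegative real.\<close>
definition gb_expected_hitting :: "nat \<Rightarrow> (nat \<Rightarrow> nat \<Rightarrow> bool) \<Rightarrow> nat set \<Rightarrow> (nat \<Rightarrow> nat list)
    \<Rightarrow> nat \<Rightarrow> nat \<Rightarrow> ennreal" where
  "gb_expected_hitting n E X geo a b = (\<Sum>t. ennreal (gb_tail n E X geo a b t))"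

end

theory Submission
  imports Defs
begin


lemma gb_trans_nonneg: "gb_trans n E X geo x y \<ge> 0"
  unfolding gb_trans_def by auto

lemma gb_surv_nonneg: "gb_surv n E X geo a b t y \<ge> 0"
proof (induction t arbitrary: y)
  case 0 then show ?case by simp
next
  case (Suc t) then show ?case
    by (auto intro!: sum_nonneg mult_nonneg_nonneg simp: gb_trans_nonneg)
qed

lemma hitting_lower:
  fixes h :: "nat \<Rightarrow> real"
  assumes ab: "a < n" "b < n" "a \<noteq> b"
  and stoch: "\<And>x. x < n \<Longrightarrow> x \<noteq> b \<Longrightarrow> (\<Sum>y<n. gb_trans n E X geo x y) = 1"
  and drift: "\<And>x. x < n \<Longrightarrow> x \<noteq> b \<Longrightarrow> (\<Sum>y<n. gb_trans n E X geo x y * h y) \<le> h x + 1"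
  and hnn: "\<And>y. y < n \<Longrightarrow> h y \<ge> 0"
  shows "\<exists>T. h b / 2 - h a \<le> (\<Sum>t<T. gb_tail n E X geo a b t)"
proof -
  let ?V = "{..<n} - {b}"
  let ?P = "gb_trans n E X geo"
  let ?S = "gb_surv n E X geo a b"
  let ?tail = "gb_tail n E X geo a b"
  define Phi where "Phi t = (\<Sum>y\<in>?V. ?S t y * h y)" for t
  have fin: "finite ?V" by simp
  have bV: "b \<notin> ?V" by simp
  have Sdef: "\<And>t y. y \<in> ?V \<Longrightarrow> ?S (Suc t) y = (\<Sum>x\<in>?V. ?S t x * ?P x y)" by auto
  have step: "Phi (Suc t) + h b * (1 - ?tail (Suc t)) \<le> Phi t + h b * (1 - ?tail t) + ?tail t" for t
  proof -
    have r1: "(\<Sum>y\<in>?V. ?P x y * h y) = (\<Sum>y<n. ?P x y * h y) - ?P x b * h b" for x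
      using ab(2) by (simp add: sum_diff1)
    have r2: "(\<Sum>y\<in>?V. ?P x y) = (\<Sum>y<n. ?P x y) - ?P x b" for x
      using ab(2) by (simp add: sum_diff1)
    have "Phi (Suc t) = (\<Sum>y\<in>?V. (\<Sum>x\<in>?V. ?S t x * ?P x y) * h y)"
      unfolding Phi_def by (rule sum.cong) (auto simp: Sdef)
    also have "\<dots> = (\<Sum>y\<in>?V. \<Sum>x\<in>?V. ?S t x * (?P x y * h y))"
      by (simp only: sum_distrib_right mult.assoc)
    also have "\<dots> = (\<Sum>x\<in>?V. \<Sum>y\<in>?V. ?S t x * (?P x y * h y))"
      by (rule sum.swap)
    also have "\<dots> = (\<Sum>x\<in>?V. ?S t x * (\<Sum>y\<in>?V. ?P x y * h y))"
      by (simp only: sum_distrib_left)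
    also have "\<dots> \<le> (\<Sum>x\<in>?V. ?S t x * (h x + 1 - ?P x b * h b))"
      apply (rule sum_mono)
      apply (rule mult_left_mono)
      using drift by (auto simp: r1 gb_surv_nonneg)
    finally have A: "Phi (Suc t) \<le> (\<Sum>x\<in>?V. ?S t x * (h x + 1 - ?P x b * h b))" .
    have "?tail (Suc t) = (\<Sum>y\<in>?V. (\<Sum>x\<in>?V. ?S t x * ?P x y))"
      unfolding gb_tail_def by (rule sum.cong) (auto simp: Sdef)
    also have "\<dots> = (\<Sum>x\<in>?V. \<Sum>y\<in>?V. ?S t x * ?P x y)"
      by (rule sum.swap)
    also have "\<dots> = (\<Sum>x\<in>?V. ?S t x * (\<Sum>y\<in>?V. ?P x y))"
      by (simp only: sum_distrib_left)
    also have "\<dots> = (\<Sum>x\<in>?V. ?S t x * (1 - ?P x b))"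
      using stoch by (intro sum.cong) (auto simp: r2)
    finally have B: "?tail (Suc t) = (\<Sum>x\<in>?V. ?S t x * (1 - ?P x b))" .
    have C: "(\<Sum>x\<in>?V. ?S t x * (h x + 1 - ?P x b * h b)) = Phi t + ?tail t - h b * (\<Sum>x\<in>?V. ?S t x * ?P x b)"
    proof -
      have "(\<Sum>x\<in>?V. ?S t x * (h x + 1 - ?P x b * h b)) = (\<Sum>x\<in>?V. ?S t x * h x + ?S t x - h b * (?S t x * ?P x b))"
        by (rule sum.cong) (auto simp: algebra_simps)
      also have "\<dots> = (\<Sum>x\<in>?V. ?S t x * h x) + (\<Sum>x\<in>?V. ?S t x) - h b * (\<Sum>x\<in>?V. ?S t x * ?P x b)"
        by (simp only: sum.distrib sum_subtractf sum_distrib_left)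
      finally show ?thesis unfolding Phi_def gb_tail_def .
    qed
    have D: "?tail (Suc t) = ?tail t - (\<Sum>x\<in>?V. ?S t x * ?P x b)"
    proof -
      have "(\<Sum>x\<in>?V. ?S t x * (1 - ?P x b)) = (\<Sum>x\<in>?V. ?S t x - ?S t x * ?P x b)"
        by (rule sum.cong) (auto simp: algebra_simps)
      also have "\<dots> = ?tail t - (\<Sum>x\<in>?V. ?S t x * ?P x b)"
        unfolding gb_tail_def by (simp only: sum_subtractf)
      finally show ?thesis using B by simp
    qed
    have E: "h b * (1 - ?tail (Suc t)) = h b * (1 - ?tail t) + h b * (\<Sum>x\<in>?V. ?S t x * ?P x b)"
      unfolding D by (simp add: algebra_simps)
    show ?thesis using A C E by linarith
  qed
  have main: "Phi t + h b * (1 - ?tail t) \<le> h a + (\<Sum>s<t. ?tail s)" for t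
  proof (induction t)
    case 0
    have "Phi 0 = (\<Sum>y\<in>?V. if y = a then h a else 0)" unfolding Phi_def
      by (rule sum.cong) auto
    also have "\<dots> = h a" using ab by (simp add: sum.delta)
    finally have "Phi 0 = h a" .
    moreover have "?tail 0 = 1" unfolding gb_tail_def using ab
      by (simp add: sum.delta)
    ultimately show ?case by simp
  next
    case (Suc t) then show ?case using step[of t] by simp
  qed
  have Phinn: "Phi t \<ge> 0" for t
    unfolding Phi_def using hnn by (auto intro!: sum_nonneg mult_nonneg_nonneg gb_surv_nonneg)
  have tnn: "?tail t \<ge> 0" for t unfolding gb_tail_def by (auto intro!: sum_nonneg gb_surv_nonneg)
  show ?thesis
  proof (cases "\<exists>T. ?tail T \<le> 1/2")
    case True
    then obtain T where T: "?tail T \<le> 1/2" by blast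
    have "h b * (1 - ?tail T) \<le> h a + (\<Sum>s<T. ?tail s)" using main[of T] Phinn[of T] by linarith
    moreover have "h b / 2 \<le> h b * (1 - ?tail T)" using T hnn[OF ab(2)]
      using mult_left_mono[of "1/2" "1 - ?tail T" "h b"] by simp
    ultimately show ?thesis by (intro exI[of _ T]) linarith
  next
    case False
    then have gt: "\<And>s. ?tail s > 1/2" using not_le by blast
    define T where "T = nat \<lceil>h b\<rceil>"
    have "(\<Sum>s<T. (1/2::real)) \<le> (\<Sum>s<T. ?tail s)"
      using gt by (intro sum_mono) (simp add: less_imp_le)
    then have "real T / 2 \<le> (\<Sum>s<T. ?tail s)" by simp
    moreover have "h b \<le> real T" unfolding T_def by linarith
    moreover have "h a \<ge> 0" using hnn ab by simp
    ultimately show ?thesis by (intro exI[of _ T]) linarith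
  qed
qed




definition R :: "nat \<Rightarrow> nat \<Rightarrow> nat \<Rightarrow> nat \<Rightarrow> bool" where
 "R W M u v \<longleftrightarrow> (v = Suc u \<and> v \<le> M) \<or> (1 \<le> u \<and> u \<le> W \<and> v = M + u)
   \<or> (M < u \<and> u < M + 3*W \<and> v = u + W)
   \<or> (M + 3*W < u \<and> u < M + 4*W \<and> v + 3*W = u + 1)"

definition G :: "nat \<Rightarrow> nat \<Rightarrow> nat \<Rightarrow> nat \<Rightarrow> bool" where
 "G W M u v \<longleftrightarrow> R W M u v \<or> R W M v u"

context fixes W M :: nat assumes W6: "6 \<le> W" and MW: "W + 1 \<le> M"
begin

lemma nb_spine_low: "1 \<le> u \<Longrightarrow> u \<le> W \<Longrightarrow> G W M u v \<longleftrightarrow> (v = u - 1 \<or> v = u + 1 \<or> v = M + u)"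
  using W6 MW unfolding G_def R_def by auto

lemma nb_spine_mid: "W < u \<Longrightarrow> u < M \<Longrightarrow> G W M u v \<longleftrightarrow> (v = u - 1 \<or> v = u + 1)"
  using W6 MW unfolding G_def R_def by auto

lemma nb_spine_top: "G W M M v \<longleftrightarrow> (v = M - 1)"
  using W6 MW unfolding G_def R_def by auto

lemma nb_zero: "G W M 0 v \<longleftrightarrow> (v = 1)"
  using W6 MW unfolding G_def R_def by auto

lemma nb_T1_first: "G W M (M + 1) v \<longleftrightarrow> (v = 1 \<or> v = M + W + 1)"
  using W6 MW unfolding G_def R_def by auto

lemma nb_T1: "2 \<le> x \<Longrightarrow> x \<le> W \<Longrightarrow> G W M (M + x) v \<longleftrightarrow> (v = x \<or> v = M + W + x \<or> v = M + 3*W + x - 1)"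
  using W6 MW unfolding G_def R_def by auto

lemma nb_T2: "1 \<le> x \<Longrightarrow> x \<le> W \<Longrightarrow> G W M (M + W + x) v \<longleftrightarrow> (v = M + x \<or> v = M + 2*W + x)"
  using W6 MW unfolding G_def R_def by auto

lemma nb_T3: "1 \<le> x \<Longrightarrow> x < W \<Longrightarrow> G W M (M + 2*W + x) v \<longleftrightarrow> (v = M + W + x \<or> v = M + 3*W + x)"
  using W6 MW unfolding G_def R_def by auto

lemma nb_T3_last: "G W M (M + 3*W) v \<longleftrightarrow> (v = M + 2*W)"
  using W6 MW unfolding G_def R_def by auto

lemma nb_Q: "1 \<le> x \<Longrightarrow> x < W \<Longrightarrow> G W M (M + 3*W + x) v \<longleftrightarrow> (v = M + 2*W + x \<or> v = M + x + 1)"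
  using W6 MW unfolding G_def R_def by auto

end



lemma walk_single: "is_walk E [x]"
  unfolding is_walk_def by simp

lemma walk_Cons: "is_walk E p \<Longrightarrow> E x (hd p) \<Longrightarrow> is_walk E (x # p)"
  unfolding is_walk_def
  apply (auto simp: nth_Cons split: nat.splits)
  by (metis hd_conv_nth)

lemma walk_tl: "is_walk E p \<Longrightarrow> 1 < length p \<Longrightarrow> is_walk E (tl p)"
  unfolding is_walk_def by (cases p) auto

lemma rtranclp_walk: "E\<^sup>*\<^sup>* x y \<Longrightarrow> \<exists>p. is_walk E p \<and> hd p = x \<and> last p = y"
proof (induction rule: converse_rtranclp_induct)
  case base then show ?case using walk_single by (metis last.simps list.sel(1))
next
  case (step u v)
  then obtain p where p: "is_walk E p" "hd p = v" "last p = y" by blast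
  have "p \<noteq> []" using p(1) unfolding is_walk_def by simp
  then show ?case using p step(1) walk_Cons[of E p u]
    by (intro exI[of _ "u # p"]) auto
qed

lemma walk_pot:
  fixes phi :: "nat \<Rightarrow> nat"
  assumes "is_walk E p" and pot: "\<And>u v. E u v \<Longrightarrow> phi u \<le> phi v + 1"
  shows "phi (hd p) \<le> phi (last p) + (length p - 1)"
  using assms(1)
proof (induction p)
  case Nil then show ?case by (simp add: is_walk_def)
next
  case (Cons x q)
  show ?case
  proof (cases q)
    case Nil then show ?thesis by simp
  next
    case (Cons y r)
    have wq: "is_walk E q" using Cons.prems walk_tl[of E "x # q"] \<open>q = y # r\<close> by simp
    have "E x y" using Cons.prems \<open>q = y # r\<close> unfolding is_walk_def by force
    then have "phi x \<le> phi y + 1" by (rule pot)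
    moreover have "phi (hd q) \<le> phi (last q) + (length q - 1)" using Cons.IH wq by simp
    ultimately show ?thesis using \<open>q = y # r\<close> by simp
  qed
qed

lemma gdist_le: "is_walk E p \<Longrightarrow> hd p = x \<Longrightarrow> last p = y \<Longrightarrow> gdist E x y \<le> length p - 1"
  unfolding gdist_def
  apply (rule Least_le)
  apply (rule exI[of _ p])
  by (cases p) (auto simp: is_walk_def)

lemma gdist_ge:
  fixes phi :: "nat \<Rightarrow> nat"
  assumes "\<exists>p. is_walk E p \<and> hd p = x \<and> last p = y"
  and pot: "\<And>u v. E u v \<Longrightarrow> phi u \<le> phi v + 1"
  shows "phi x \<le> phi y + gdist E x y"
proof -
  from assms(1) obtain p where p: "is_walk E p" "hd p = x" "last p = y" by blast
  have ex: "\<exists>k p. is_walk E p \<and> hd p = x \<and> last p = y \<and> length p = Suc k"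
    using p by (intro exI[of _ "length p - 1"] exI[of _ p]) (cases p, auto simp: is_walk_def)
  have "\<exists>p. is_walk E p \<and> hd p = x \<and> last p = y \<and> length p = Suc (gdist E x y)"
    unfolding gdist_def by (rule LeastI_ex[OF ex])
  then obtain q where q: "is_walk E q" "hd q = x" "last q = y" "length q = Suc (gdist E x y)" by blast
  show ?thesis using walk_pot[OF q(1) pot] q by simp
qed

lemma geodesic_next:
  fixes phi :: "nat \<Rightarrow> nat"
  assumes g: "is_geodesic E x b p" and pot: "\<And>u v. E u v \<Longrightarrow> phi u \<le> phi v + 1"
    and pos: "phi b < phi x"
  shows "1 < length p" "E x (p ! 1)" "phi (p ! 1) \<le> phi b + (gdist E x b - 1)"
proof -
  have w: "is_walk E p" "hd p = x" "last p = b" "length p = Suc (gdist E x b)"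
    using g unfolding is_geodesic_def by auto
  have ex: "\<exists>p. is_walk E p \<and> hd p = x \<and> last p = b" using w by blast
  have "phi x \<le> phi b + gdist E x b" by (rule gdist_ge[where phi=phi, OF ex pot])
  then have gpos: "gdist E x b \<ge> 1" using pos by simp
  then show l: "1 < length p" using w by simp
  show "E x (p ! 1)" using w l unfolding is_walk_def by (metis hd_conv_nth list.size(3) not_one_less_zero One_nat_def)
  have wt: "is_walk E (tl p)" using walk_tl[OF w(1) l] .
  have "hd (tl p) = p ! 1" using l by (cases p) (auto simp: hd_conv_nth)
  moreover have "last (tl p) = b" using l w by (cases p) auto
  moreover have "length (tl p) = gdist E x b" using w by simp
  ultimately show "phi (p ! 1) \<le> phi b + (gdist E x b - 1)" using walk_pot[OF wt pot] by simp
qed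




definition hh :: "nat \<Rightarrow> nat \<Rightarrow> nat \<Rightarrow> real" where
 "hh W M v = (if v \<le> M then 16 * (5/4)^(W - v)
   else if v \<le> M + W then 15 * (5/4)^(W - (v - M))
   else if v \<le> M + 2*W then 14 * (5/4)^(W - (v - M - W))
   else if v \<le> M + 3*W then 13 * (5/4)^(W - (v - M - 2*W))
   else 12 * (5/4)^(W - (v - M - 3*W)))"

definition phi :: "nat \<Rightarrow> nat \<Rightarrow> nat \<Rightarrow> nat" where
 "phi W M v = (if v \<le> M then v
   else if v \<le> M + W then v - M + 1
   else if v \<le> M + 2*W then v - M - W + 2
   else if v \<le> M + 3*W then v - M - 2*W + 3
   else v - M - 3*W + 3)"

lemma sum_trans_unexc:
  assumes "u \<notin> X" "{y\<in>{..<n}. E u y} = S"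
  shows "(\<Sum>y<n. gb_trans n E X geo u y * f y) = (\<Sum>y\<in>S. f y) / real (card S)"
proof -
  have "(\<Sum>y<n. gb_trans n E X geo u y * f y) = (\<Sum>y<n. if E u y then f y / real (card S) else 0)"
    using assms by (intro sum.cong) (auto simp: gb_trans_def deg_def)
  also have "\<dots> = (\<Sum>y\<in>{y\<in>{..<n}. E u y}. f y / real (card S))" by (rule sum.inter_filter[symmetric]) simp
  also have "\<dots> = (\<Sum>y\<in>S. f y) / real (card S)" using assms(2) by (simp add: sum_divide_distrib)
  finally show ?thesis .
qed

lemma sum_trans_exc:
  assumes "u \<in> X" "c < n" "geo u ! 1 = c"
  shows "(\<Sum>y<n. gb_trans n E X geo u y * f y) = f c"
proof -
  have "(\<Sum>y<n. gb_trans n E X geo u y * f y) = (\<Sum>y<n. if y = c then f c else 0)"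
    using assms by (intro sum.cong) (auto simp: gb_trans_def)
  also have "\<dots> = f c" using assms(2) by (simp add: sum.delta)
  finally show ?thesis .
qed

definition Xs :: "nat \<Rightarrow> nat \<Rightarrow> nat set" where "Xs W M = {M + 3*W<..<M + 4*W}"

lemma sum3: "a \<noteq> b \<Longrightarrow> a \<noteq> c \<Longrightarrow> b \<noteq> c \<Longrightarrow> (\<Sum>y\<in>{a,b,c}. f y) = f a + f b + f c \<and> card {a,b,c} = 3"
  by (simp add: algebra_simps)
lemma sum2: "a \<noteq> b \<Longrightarrow> (\<Sum>y\<in>{a,b}. f y) = f a + f b \<and> card {a,b} = 2"
  by simp

lemma ineq1: "(16 * (5/4::real)^(k+2) + 16 * (5/4)^k + 15*(5/4)^(k+1))/3 \<le> 16 * (5/4)^(k+1) + 1"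
proof -
  define z where "z = (5/4::real)^k"
  have a: "(5/4::real)^(k+2) = z * (25/16)" unfolding z_def by (simp add: power_add)
  have b: "(5/4::real)^(k+1) = z * (5/4)" unfolding z_def by simp
  have "z \<ge> 0" unfolding z_def by simp
  then show ?thesis unfolding a b z_def[symmetric] by simp
qed

context fixes W M :: nat assumes W6: "6 \<le> W" and MW: "W + 1 \<le> M"
begin

lemma R_bounds: "R W M u v \<Longrightarrow> u < M + 4*W \<and> v < M + 4*W \<and> u \<noteq> v"
  using W6 MW unfolding R_def by auto

lemma simple: "simple_graph (M + 4*W) (G W M)"
  unfolding simple_graph_def G_def using R_bounds by blast

lemma G_sym: "G W M u v = G W M v u"
  unfolding G_def by blast

lemma vertex_cases:
  assumes "u < M + 4*W"
  obtains (sp0) "u = 0" | (splow) "1 \<le> u" "u \<le> W" | (spmid) "W < u" "u < M" | (sptop) "u = M"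
    | (T1first) "u = M + 1" | (T1) x where "2 \<le> x" "x \<le> W" "u = M + x"
    | (T2) x where "1 \<le> x" "x \<le> W" "u = M + W + x"
    | (T3) x where "1 \<le> x" "x < W" "u = M + 2*W + x"
    | (T3last) "u = M + 3*W"
    | (Q) x where "1 \<le> x" "x < W" "u = M + 3*W + x"
proof -
  show ?thesis
  proof (cases "u \<le> M")
    case True
    show ?thesis
    proof (cases "u = 0")
      case True then show ?thesis by (rule sp0)
    next
      case u0: False
      show ?thesis
      proof (cases "u \<le> W")
        case True then show ?thesis using u0 splow by simp
      next
        case False
        show ?thesis
        proof (cases "u = M")
          case True then show ?thesis by (rule sptop)
        next
          case False then show ?thesis using \<open>\<not> u \<le> W\<close> \<open>u \<le> M\<close> spmid by simp
        qed
      qed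
    qed
  next
    case uM: False
    show ?thesis
    proof (cases "u \<le> M + W")
      case True
      show ?thesis
      proof (cases "u = M + 1")
        case True then show ?thesis by (rule T1first)
      next
        case False then show ?thesis using T1[of "u - M"] uM \<open>u \<le> M + W\<close> by simp
      qed
    next
      case uMW: False
      show ?thesis
      proof (cases "u \<le> M + 2*W")
        case True then show ?thesis using T2[of "u - M - W"] uMW by simp
      next
        case uM2: False
        show ?thesis
        proof (cases "u < M + 3*W")
          case True then show ?thesis using T3[of "u - M - 2*W"] uM2 by simp
        next
          case uM3: False
          show ?thesis
          proof (cases "u = M + 3*W")
            case True then show ?thesis by (rule T3last)
          next
            case False then show ?thesis using Q[of "u - M - 3*W"] uM3 assms by simp
          qed
        qed
      qed
    qed
  qed
qed

lemma spine_walk: "k \<le> M \<Longrightarrow> \<exists>p. is_walk (G W M) p \<and> hd p = k \<and> last p = 0 \<and> length p = Suc k"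
proof (induction k)
  case 0 then show ?case by (intro exI[of _ "[0]"]) (simp add: walk_single)
next
  case (Suc k)
  then obtain p where p: "is_walk (G W M) p" "hd p = k" "last p = 0" "length p = Suc k" by auto
  have e: "G W M (Suc k) k" using Suc.prems unfolding G_def R_def by auto
  have "p \<noteq> []" using p by auto
  then show ?case using p e walk_Cons[of "G W M" p "Suc k"] by (intro exI[of _ "Suc k # p"]) auto
qed

lemma sp_reach: "k \<le> M \<Longrightarrow> (G W M)\<^sup>*\<^sup>* k 0"
proof (induction k)
  case 0 then show ?case by simp
next
  case (Suc k)
  have e: "G W M (Suc k) k" using Suc.prems unfolding G_def R_def by auto
  have "k \<le> M" using Suc.prems by simp
  then show ?case using converse_rtranclp_into_rtranclp[OF e Suc.IH] by blast
qed

lemma t1_reach: "1 \<le> x \<Longrightarrow> x \<le> W \<Longrightarrow> (G W M)\<^sup>*\<^sup>* (M + x) 0"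
proof -
  assume x: "1 \<le> x" "x \<le> W"
  have e: "G W M (M + x) x" using x unfolding G_def R_def by auto
  have "x \<le> M" using x MW by simp
  then show ?thesis using converse_rtranclp_into_rtranclp[OF e sp_reach] by blast
qed

lemma t2_reach: "1 \<le> x \<Longrightarrow> x \<le> W \<Longrightarrow> (G W M)\<^sup>*\<^sup>* (M + W + x) 0"
proof -
  assume x: "1 \<le> x" "x \<le> W"
  have e: "G W M (M + W + x) (M + x)" using x unfolding G_def R_def by auto
  show ?thesis using converse_rtranclp_into_rtranclp[OF e t1_reach[OF x]] .
qed

lemma t3_reach: "1 \<le> x \<Longrightarrow> x \<le> W \<Longrightarrow> (G W M)\<^sup>*\<^sup>* (M + 2*W + x) 0"
proof -
  assume x: "1 \<le> x" "x \<le> W"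
  have e: "G W M (M + 2*W + x) (M + W + x)" using x unfolding G_def R_def by auto
  show ?thesis using converse_rtranclp_into_rtranclp[OF e t2_reach[OF x]] .
qed

lemma q_reach: "1 \<le> x \<Longrightarrow> x < W \<Longrightarrow> (G W M)\<^sup>*\<^sup>* (M + 3*W + x) 0"
proof -
  assume x: "1 \<le> x" "x < W"
  have e: "G W M (M + 3*W + x) (M + 2*W + x)" using x unfolding G_def R_def by auto
  have "x \<le> W" using x by simp
  then show ?thesis using converse_rtranclp_into_rtranclp[OF e t3_reach[OF x(1)]] by blast
qed

lemma reach0: "u < M + 4*W \<Longrightarrow> (G W M)\<^sup>*\<^sup>* u 0"
proof -
  assume u: "u < M + 4*W"
  show ?thesis
  proof (cases rule: vertex_cases[OF u, case_names sp0 splow spmid sptop T1first T1 T2 T3 T3last Q])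
    case T1first then show ?thesis using t1_reach[of 1] W6 by simp
  next
    case (T1 x) then show ?thesis using t1_reach[of x] by simp
  next
    case (T2 x) then show ?thesis using t2_reach[of x] by simp
  next
    case (T3 x) then show ?thesis using t3_reach[of x] by simp
  next
    case T3last then show ?thesis using t3_reach[of W] W6 by (simp add: algebra_simps)
  next
    case (Q x) then show ?thesis using q_reach[of x] by simp
  next
    case sp0 then show ?thesis by simp
  next
    case splow then show ?thesis using sp_reach[of u] MW by simp
  next
    case spmid then show ?thesis using sp_reach[of u] by simp
  next
    case sptop then show ?thesis using sp_reach[of u] by simp
  qed
qed

lemma connected: "connected_graph (M + 4*W) (G W M)"
proof -
  have cv: "conversep (G W M) = G W M" using G_sym by (auto simp: fun_eq_iff)
  have "(G W M)\<^sup>*\<^sup>* x y" if "x < M + 4*W" "y < M + 4*W" for x y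
  proof -
    have "(G W M)\<^sup>*\<^sup>* y 0" using reach0 that by blast
    then have "(conversep (G W M))\<^sup>*\<^sup>* 0 y" by (rule rtranclp_converseI)
    then have "(G W M)\<^sup>*\<^sup>* 0 y" using cv by simp
    then show ?thesis using rtranclp_trans[OF reach0[OF that(1)]] by blast
  qed
  then have "\<forall>x<M + 4*W. \<forall>y<M + 4*W. \<exists>p. is_walk (G W M) p \<and> hd p = x \<and> last p = y"
    using rtranclp_walk by blast
  then show ?thesis unfolding connected_graph_def using W6 by simp
qed

lemma R_pot: "R W M u v \<Longrightarrow> phi W M u \<le> phi W M v + 1 \<and> phi W M v \<le> phi W M u + 1"
  unfolding R_def
  apply (elim disjE conjE)
  subgoal by (simp add: phi_def)
  subgoal using MW by (simp add: phi_def)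
  subgoal using MW by (auto simp: phi_def)
  subgoal using MW by (auto simp: phi_def)
  done

lemma pot: "G W M u v \<Longrightarrow> phi W M u \<le> phi W M v + 1"
  unfolding G_def using R_pot by blast

lemma hh_sp: "v \<le> M \<Longrightarrow> hh W M v = 16 * (5/4)^(W - v)"
  by (simp add: hh_def)
lemma hh_T1: "1 \<le> x \<Longrightarrow> x \<le> W \<Longrightarrow> hh W M (M + x) = 15 * (5/4)^(W - x)"
  by (simp add: hh_def)
lemma hh_T2: "1 \<le> x \<Longrightarrow> x \<le> W \<Longrightarrow> hh W M (M + W + x) = 14 * (5/4)^(W - x)"
  by (simp add: hh_def)
lemma hh_T3: "1 \<le> x \<Longrightarrow> x \<le> W \<Longrightarrow> hh W M (M + 2*W + x) = 13 * (5/4)^(W - x)"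
  by (simp add: hh_def)
lemma hh_Q: "1 \<le> x \<Longrightarrow> hh W M (M + 3*W + x) = 12 * (5/4)^(W - x)"
  by (simp add: hh_def)
lemma hh_nonneg: "hh W M v \<ge> 0"
  by (simp add: hh_def)


lemma nbrs: 
  assumes "\<And>v. G W M u v \<longleftrightarrow> v \<in> S" "S \<subseteq> {..<M + 4*W}"
  shows "{y\<in>{..<M + 4*W}. G W M u y} = S"
  using assms by auto

lemma Q_next:
  assumes x: "1 \<le> x" "x < W" and g: "is_geodesic (G W M) (M + 3*W + x) 0 p"
  shows "p ! 1 = M + x + 1"
proof -
  have phi0: "phi W M 0 = 0" by (simp add: phi_def)
  have phiQ: "phi W M (M + 3*W + x) = x + 3" using x by (simp add: phi_def)
  have pos: "phi W M 0 < phi W M (M + 3*W + x)" using phi0 phiQ by simp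
  note gn = geodesic_next[OF g pot pos]
  have "x + 1 \<le> M" using x MW by simp
  from spine_walk[OF this] obtain p0 where p0: "is_walk (G W M) p0" "hd p0 = x + 1" "last p0 = 0" "length p0 = Suc (x + 1)"
    by blast
  have e1: "G W M (M + x + 1) (x + 1)" using x unfolding G_def R_def by auto
  have e2: "G W M (M + 3*W + x) (M + x + 1)" using x unfolding G_def R_def by auto
  have ne: "p0 \<noteq> []" using p0 by auto
  have w1: "is_walk (G W M) ((M + x + 1) # p0)" using walk_Cons[OF p0(1)] e1 p0(2) by simp
  have w2: "is_walk (G W M) ((M + 3*W + x) # (M + x + 1) # p0)" using walk_Cons[OF w1] e2 by simp
  have "gdist (G W M) (M + 3*W + x) 0 \<le> length ((M + 3*W + x) # (M + x + 1) # p0) - 1"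
    by (rule gdist_le[OF w2]) (use p0 ne in auto)
  then have gd: "gdist (G W M) (M + 3*W + x) 0 \<le> x + 3" using p0 by simp
  have "p ! 1 = M + 2*W + x \<or> p ! 1 = M + x + 1" using gn(2) nb_Q[OF W6 MW x] by simp
  moreover have "p ! 1 \<noteq> M + 2*W + x"
  proof
    assume "p ! 1 = M + 2*W + x"
    then have "phi W M (p ! 1) = x + 3" using x by (simp add: phi_def)
    then show False using gn(3) gd phi0 by simp
  qed
  ultimately show ?thesis by blast
qed

abbreviation "NN \<equiv> M + 4*W"

lemma S_sp0: "{y\<in>{..<NN}. G W M 0 y} = {1}"
  by (rule nbrs) (use nb_zero[OF W6 MW] W6 in auto)
lemma S_splow: "1 \<le> u \<Longrightarrow> u \<le> W \<Longrightarrow> {y\<in>{..<NN}. G W M u y} = {u - 1, u + 1, M + u}"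
  by (rule nbrs) (use nb_spine_low[OF W6 MW] MW in auto)
lemma S_spmid: "W < u \<Longrightarrow> u < M \<Longrightarrow> {y\<in>{..<NN}. G W M u y} = {u - 1, u + 1}"
  by (rule nbrs) (use nb_spine_mid[OF W6 MW] MW W6 in auto)
lemma S_sptop: "{y\<in>{..<NN}. G W M M y} = {M - 1}"
  by (rule nbrs) (use nb_spine_top[OF W6 MW] MW in auto)
lemma S_T1first: "{y\<in>{..<NN}. G W M (M + 1) y} = {1, M + W + 1}"
  by (rule nbrs) (use nb_T1_first[OF W6 MW] W6 in auto)
lemma S_T1: "2 \<le> x \<Longrightarrow> x \<le> W \<Longrightarrow> {y\<in>{..<NN}. G W M (M + x) y} = {x, M + W + x, M + 3*W + x - 1}"
  by (rule nbrs) (use nb_T1[OF W6 MW] MW in auto)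
lemma S_T2: "1 \<le> x \<Longrightarrow> x \<le> W \<Longrightarrow> {y\<in>{..<NN}. G W M (M + W + x) y} = {M + x, M + 2*W + x}"
  by (rule nbrs) (use nb_T2[OF W6 MW] MW in auto)
lemma S_T3: "1 \<le> x \<Longrightarrow> x < W \<Longrightarrow> {y\<in>{..<NN}. G W M (M + 2*W + x) y} = {M + W + x, M + 3*W + x}"
  by (rule nbrs) (use nb_T3[OF W6 MW] MW in auto)
lemma S_T3last: "{y\<in>{..<NN}. G W M (M + 3*W) y} = {M + 2*W}"
  by (rule nbrs) (use nb_T3_last[OF W6 MW] MW W6 in auto)
lemma S_Q: "1 \<le> x \<Longrightarrow> x < W \<Longrightarrow> {y\<in>{..<NN}. G W M (M + 3*W + x) y} = {M + 2*W + x, M + x + 1}"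
  by (rule nbrs) (use nb_Q[OF W6 MW] MW in auto)

lemma deg_le3: "u < NN \<Longrightarrow> deg NN (G W M) u \<le> 3"
proof -
  assume u: "u < NN"
  have c2: "card {a, b::nat} \<le> 3" for a b by (auto simp: card_insert_if)
  have c3: "card {a, b, c::nat} \<le> 3" for a b c by (auto simp: card_insert_if)
  show ?thesis
  proof (cases rule: vertex_cases[OF u, case_names sp0 splow spmid sptop T1first T1 T2 T3 T3last Q])
    case sp0 then show ?thesis using S_sp0 by (simp add: deg_def)
  next
    case splow then show ?thesis using S_splow[of u] c3 by (simp add: deg_def)
  next
    case spmid then show ?thesis using S_spmid[of u] c2 by (simp add: deg_def del: One_nat_def)
  next
    case sptop then show ?thesis using S_sptop by (simp add: deg_def)
  next
    case T1first then show ?thesis using S_T1first c2 by (simp add: deg_def del: One_nat_def)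
  next
    case (T1 x) then show ?thesis using S_T1[of x] c3 by (simp add: deg_def)
  next
    case (T2 x) then show ?thesis using S_T2[of x] c2 by (simp add: deg_def)
  next
    case (T3 x) then show ?thesis using S_T3[of x] c2 by (simp add: deg_def)
  next
    case T3last then show ?thesis using S_T3last by (simp add: deg_def)
  next
    case (Q x) then show ?thesis using S_Q[of x] c2 by (simp add: deg_def)
  qed
qed

lemma deg_one: "deg NN (G W M) 1 = 3"
proof -
  have "{y\<in>{..<NN}. G W M 1 y} = {1 - 1, 1 + 1, M + 1}" by (rule S_splow) (use W6 in auto)
  moreover have "card {1 - 1::nat, 1 + 1, M + 1} = 3" using MW W6 by simp
  ultimately show ?thesis by (simp add: deg_def)
qed

lemma unexc_ok:
  assumes "u \<notin> Xs W M" "{y\<in>{..<NN}. G W M u y} = S" "S \<noteq> {}"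
    "(\<Sum>y\<in>S. hh W M y) / real (card S) \<le> hh W M u + 1"
  shows "(\<Sum>y<NN. gb_trans NN (G W M) (Xs W M) geo u y) = 1 \<and>
         (\<Sum>y<NN. gb_trans NN (G W M) (Xs W M) geo u y * hh W M y) \<le> hh W M u + 1"
proof -
  have fS: "finite S" unfolding assms(2)[symmetric] by simp
  have cS: "card S > 0" using fS assms(3) by (simp add: card_gt_0_iff)
  have "(\<Sum>y<NN. gb_trans NN (G W M) (Xs W M) geo u y * 1) = (\<Sum>y\<in>S. 1) / real (card S)"
    by (rule sum_trans_unexc[where f="\<lambda>_. 1" and geo=geo and E="G W M" and n=NN and u=u, OF assms(1,2)])
  then have "(\<Sum>y<NN. gb_trans NN (G W M) (Xs W M) geo u y) = 1" using cS by simp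
  moreover have "(\<Sum>y<NN. gb_trans NN (G W M) (Xs W M) geo u y * hh W M y) = (\<Sum>y\<in>S. hh W M y) / real (card S)"
    by (rule sum_trans_unexc[where f="hh W M" and geo=geo and E="G W M" and n=NN and u=u, OF assms(1,2)])
  ultimately show ?thesis using assms(4) by simp
qed

lemma case_splow:
  assumes splow: "1 \<le> u" "u \<le> W"
  and u: "u < NN" "u \<noteq> 0"
  assumes geo: "\<forall>x<NN. x \<noteq> 0 \<longrightarrow> is_geodesic (G W M) x 0 (geo x)"
  shows "(\<Sum>y<NN. gb_trans NN (G W M) (Xs W M) geo u y) = 1 \<and>
         (\<Sum>y<NN. gb_trans NN (G W M) (Xs W M) geo u y * hh W M y) \<le> hh W M u + 1"
proof -
  have nx: "u \<notin> Xs W M" using splow by (simp add: Xs_def)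
  have d: "u - 1 \<noteq> u + 1" "u - 1 \<noteq> M + u" "u + 1 \<noteq> M + u" using splow MW by auto
  note s3 = sum3[OF d, of "hh W M"]
  have h1: "hh W M (u - 1) = 16 * (5/4)^(W - (u - 1))" using splow MW by (simp add: hh_sp)
  have h2: "hh W M (u + 1) = 16 * (5/4)^(W - (u + 1))" using splow MW by (simp add: hh_sp)
  have h3: "hh W M (M + u) = 15 * (5/4)^(W - u)" using splow by (simp add: hh_T1)
  have h0: "hh W M u = 16 * (5/4)^(W - u)" using splow MW by (simp add: hh_sp)
  have ineq: "(hh W M (u - 1) + hh W M (u + 1) + hh W M (M + u)) / 3 \<le> hh W M u + 1"
  proof (cases "u < W")
    case True
    define k where "k = W - u - 1"
    have e1: "W - (u - 1) = k + 2" "W - (u + 1) = k" "W - u = k + 1" using True splow unfolding k_def by auto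
    show ?thesis unfolding h1 h2 h3 h0 e1 using ineq1[of k] by simp
  next
    case False
    then have "u = W" using splow by simp
    then have e1: "W - (u - 1) = 1" "W - (u + 1) = 0" "W - u = 0" using W6 by auto
    show ?thesis unfolding h1 h2 h3 h0 e1 by simp
  qed
  show ?thesis
  proof (rule unexc_ok[OF nx S_splow[OF splow]])
    show "{u - 1, u + 1, M + u} \<noteq> {}" by simp
    show "(\<Sum>y\<in>{u - 1, u + 1, M + u}. hh W M y) / real (card ({u - 1, u + 1, M + u})) \<le> hh W M u + 1"
      unfolding conjunct1[OF s3] conjunct2[OF s3] using ineq by simp
  qed
qed

lemma case_spmid:
  assumes spmid: "W < u" "u < M"
  and u: "u < NN" "u \<noteq> 0"
  assumes geo: "\<forall>x<NN. x \<noteq> 0 \<longrightarrow> is_geodesic (G W M) x 0 (geo x)"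
  shows "(\<Sum>y<NN. gb_trans NN (G W M) (Xs W M) geo u y) = 1 \<and>
         (\<Sum>y<NN. gb_trans NN (G W M) (Xs W M) geo u y * hh W M y) \<le> hh W M u + 1"
proof -
  have nx: "u \<notin> Xs W M" using spmid by (simp add: Xs_def)
  have d: "u - 1 \<noteq> u + 1" using spmid by auto
  note s2 = sum2[OF d, of "hh W M"]
  have h: "hh W M (u - 1) = 16" "hh W M (u + 1) = 16" "hh W M u = 16" using spmid by (auto simp: hh_sp)
  show ?thesis
  proof (rule unexc_ok[OF nx S_spmid[OF spmid]])
    show "{u - 1, u + 1} \<noteq> {}" by simp
    show "(\<Sum>y\<in>{u - 1, u + 1}. hh W M y) / real (card ({u - 1, u + 1})) \<le> hh W M u + 1"
      unfolding conjunct1[OF s2] conjunct2[OF s2] using h by simp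
  qed
qed

lemma case_sptop:
  assumes sptop: "u = M"
  and u: "u < NN" "u \<noteq> 0"
  assumes geo: "\<forall>x<NN. x \<noteq> 0 \<longrightarrow> is_geodesic (G W M) x 0 (geo x)"
  shows "(\<Sum>y<NN. gb_trans NN (G W M) (Xs W M) geo u y) = 1 \<and>
         (\<Sum>y<NN. gb_trans NN (G W M) (Xs W M) geo u y * hh W M y) \<le> hh W M u + 1"
proof -
  have nx: "u \<notin> Xs W M" using sptop by (simp add: Xs_def)
  have h: "hh W M (M - 1) = 16" "hh W M M = 16" using MW by (auto simp: hh_sp)
  have S: "{y\<in>{..<NN}. G W M u y} = {M - 1}" unfolding sptop by (rule S_sptop)
  show ?thesis
  proof (rule unexc_ok[OF nx S])
    show "{M - 1} \<noteq> {}" by simp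
    show "(\<Sum>y\<in>{M - 1}. hh W M y) / real (card ({M - 1})) \<le> hh W M u + 1"
      using h sptop by simp
  qed
qed

lemma case_T1first:
  assumes T1first: "u = M + 1"
  and u: "u < NN" "u \<noteq> 0"
  assumes geo: "\<forall>x<NN. x \<noteq> 0 \<longrightarrow> is_geodesic (G W M) x 0 (geo x)"
  shows "(\<Sum>y<NN. gb_trans NN (G W M) (Xs W M) geo u y) = 1 \<and>
         (\<Sum>y<NN. gb_trans NN (G W M) (Xs W M) geo u y * hh W M y) \<le> hh W M u + 1"
proof -
  have nx: "u \<notin> Xs W M" using T1first W6 by (simp add: Xs_def)
  have d: "(1::nat) \<noteq> M + W + 1" using MW by auto
  note s2 = sum2[OF d, of "hh W M"]
  have h: "hh W M 1 = 16 * (5/4)^(W - 1)" "hh W M (M + W + 1) = 14 * (5/4)^(W - 1)"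
    "hh W M (M + 1) = 15 * (5/4)^(W - 1)"
    using MW W6 hh_T2[of 1] hh_T1[of 1] by (auto simp: hh_sp)
  show ?thesis
  proof (rule unexc_ok[OF nx S_T1first[unfolded T1first[symmetric]]])
    show "{1, M + W + 1} \<noteq> {}" by simp
    show "(\<Sum>y\<in>{1, M + W + 1}. hh W M y) / real (card ({1, M + W + 1})) \<le> hh W M u + 1"
      unfolding conjunct1[OF s2] conjunct2[OF s2] using h T1first by simp
  qed
qed

lemma case_T1:
  assumes T1: "2 \<le> x" "x \<le> W" "u = M + x"
  and u: "u < NN" "u \<noteq> 0"
  assumes geo: "\<forall>x<NN. x \<noteq> 0 \<longrightarrow> is_geodesic (G W M) x 0 (geo x)"
  shows "(\<Sum>y<NN. gb_trans NN (G W M) (Xs W M) geo u y) = 1 \<and>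
         (\<Sum>y<NN. gb_trans NN (G W M) (Xs W M) geo u y * hh W M y) \<le> hh W M u + 1"
proof -
  have nx: "u \<notin> Xs W M" using T1 by (simp add: Xs_def)
  have d: "x \<noteq> M + W + x" "x \<noteq> M + 3*W + x - 1" "M + W + x \<noteq> M + 3*W + x - 1" using T1 MW by auto
  note s3 = sum3[OF d, of "hh W M"]
  have e: "M + 3*W + x - 1 = M + 3*W + (x - 1)" "W - (x - 1) = Suc (W - x)" using T1 by auto
  have h: "hh W M x = 16 * (5/4)^(W - x)" "hh W M (M + W + x) = 14 * (5/4)^(W - x)"
    "hh W M (M + 3*W + x - 1) = 15 * (5/4)^(W - x)" "hh W M (M + x) = 15 * (5/4)^(W - x)"
    using T1 MW hh_T2[of x] hh_T1[of x] hh_Q[of "x - 1"] unfolding e by (auto simp: hh_sp)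
  show ?thesis
  proof (rule unexc_ok[OF nx S_T1[OF T1(1,2), unfolded T1(3)[symmetric]]])
    show "{x, M + W + x, M + 3*W + x - 1} \<noteq> {}" by simp
    show "(\<Sum>y\<in>{x, M + W + x, M + 3*W + x - 1}. hh W M y) / real (card ({x, M + W + x, M + 3*W + x - 1})) \<le> hh W M u + 1"
      unfolding conjunct1[OF s3] conjunct2[OF s3] using h T1 by simp
  qed
qed

lemma case_T2:
  assumes T2: "1 \<le> x" "x \<le> W" "u = M + W + x"
  and u: "u < NN" "u \<noteq> 0"
  assumes geo: "\<forall>x<NN. x \<noteq> 0 \<longrightarrow> is_geodesic (G W M) x 0 (geo x)"
  shows "(\<Sum>y<NN. gb_trans NN (G W M) (Xs W M) geo u y) = 1 \<and>
         (\<Sum>y<NN. gb_trans NN (G W M) (Xs W M) geo u y * hh W M y) \<le> hh W M u + 1"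
proof -
  have nx: "u \<notin> Xs W M" using T2 by (simp add: Xs_def)
  have d: "M + x \<noteq> M + 2*W + x" using T2 by auto
  note s2 = sum2[OF d, of "hh W M"]
  have h: "hh W M (M + x) = 15 * (5/4)^(W - x)" "hh W M (M + 2*W + x) = 13 * (5/4)^(W - x)"
    "hh W M (M + W + x) = 14 * (5/4)^(W - x)"
    using T2 hh_T1[of x] hh_T2[of x] hh_T3[of x] by auto
  show ?thesis
  proof (rule unexc_ok[OF nx S_T2[OF T2(1,2), unfolded T2(3)[symmetric]]])
    show "{M + x, M + 2*W + x} \<noteq> {}" by simp
    show "(\<Sum>y\<in>{M + x, M + 2*W + x}. hh W M y) / real (card ({M + x, M + 2*W + x})) \<le> hh W M u + 1"
      unfolding conjunct1[OF s2] conjunct2[OF s2] using h T2 by simp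
  qed
qed

lemma case_T3:
  assumes T3: "1 \<le> x" "x < W" "u = M + 2*W + x"
  and u: "u < NN" "u \<noteq> 0"
  assumes geo: "\<forall>x<NN. x \<noteq> 0 \<longrightarrow> is_geodesic (G W M) x 0 (geo x)"
  shows "(\<Sum>y<NN. gb_trans NN (G W M) (Xs W M) geo u y) = 1 \<and>
         (\<Sum>y<NN. gb_trans NN (G W M) (Xs W M) geo u y * hh W M y) \<le> hh W M u + 1"
proof -
  have nx: "u \<notin> Xs W M" using T3 by (simp add: Xs_def)
  have d: "M + W + x \<noteq> M + 3*W + x" using T3 by auto
  note s2 = sum2[OF d, of "hh W M"]
  have h: "hh W M (M + W + x) = 14 * (5/4)^(W - x)" "hh W M (M + 3*W + x) = 12 * (5/4)^(W - x)"
    "hh W M (M + 2*W + x) = 13 * (5/4)^(W - x)"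
    using T3 hh_T2[of x] hh_Q[of x] hh_T3[of x] by auto
  show ?thesis
  proof (rule unexc_ok[OF nx S_T3[OF T3(1,2), unfolded T3(3)[symmetric]]])
    show "{M + W + x, M + 3*W + x} \<noteq> {}" by simp
    show "(\<Sum>y\<in>{M + W + x, M + 3*W + x}. hh W M y) / real (card ({M + W + x, M + 3*W + x})) \<le> hh W M u + 1"
      unfolding conjunct1[OF s2] conjunct2[OF s2] using h T3 by simp
  qed
qed

lemma case_T3last:
  assumes T3last: "u = M + 3*W"
  and u: "u < NN" "u \<noteq> 0"
  assumes geo: "\<forall>x<NN. x \<noteq> 0 \<longrightarrow> is_geodesic (G W M) x 0 (geo x)"
  shows "(\<Sum>y<NN. gb_trans NN (G W M) (Xs W M) geo u y) = 1 \<and>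
         (\<Sum>y<NN. gb_trans NN (G W M) (Xs W M) geo u y * hh W M y) \<le> hh W M u + 1"
proof -
  have nx: "u \<notin> Xs W M" using T3last by (simp add: Xs_def)
  have e: "M + 2*W = M + W + W" "M + 3*W = M + 2*W + W" by simp_all
  have h: "hh W M (M + 2*W) = 14" "hh W M (M + 3*W) = 13"
    using W6 hh_T2[of W] hh_T3[of W] unfolding e by auto
  show ?thesis
  proof (rule unexc_ok[OF nx S_T3last[unfolded T3last[symmetric]]])
    show "{M + 2*W} \<noteq> {}" by simp
    show "(\<Sum>y\<in>{M + 2*W}. hh W M y) / real (card ({M + 2*W})) \<le> hh W M u + 1"
      using h T3last by simp
  qed
qed

lemma case_Q:
  assumes Q: "1 \<le> x" "x < W" "u = M + 3*W + x"
  and u: "u < NN" "u \<noteq> 0"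
  assumes geo: "\<forall>x<NN. x \<noteq> 0 \<longrightarrow> is_geodesic (G W M) x 0 (geo x)"
  shows "(\<Sum>y<NN. gb_trans NN (G W M) (Xs W M) geo u y) = 1 \<and>
         (\<Sum>y<NN. gb_trans NN (G W M) (Xs W M) geo u y * hh W M y) \<le> hh W M u + 1"
proof -
  have ux: "u \<in> Xs W M" using Q by (simp add: Xs_def)
  have g: "is_geodesic (G W M) u 0 (geo u)" using geo u by blast
  have nxt: "geo u ! 1 = M + x + 1" using Q_next[OF Q(1,2)] g Q(3) by simp
  have lt: "M + x + 1 < NN" using Q by simp
  have "(\<Sum>y<NN. gb_trans NN (G W M) (Xs W M) geo u y * 1) = 1"
    by (rule sum_trans_exc[where f="\<lambda>_. 1" and E="G W M" and n=NN and X="Xs W M" and geo=geo, OF ux lt nxt])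
  moreover have "(\<Sum>y<NN. gb_trans NN (G W M) (Xs W M) geo u y * hh W M y) = hh W M (M + x + 1)"
    by (rule sum_trans_exc[where f="hh W M" and E="G W M" and n=NN and X="Xs W M" and geo=geo, OF ux lt nxt])
  moreover have "hh W M (M + x + 1) = hh W M u"
  proof -
    have e: "W - x = Suc (W - (x + 1))" using Q by auto
    have "hh W M (M + (x + 1)) = 15 * (5/4)^(W - (x + 1))" using Q by (intro hh_T1) auto
    moreover have "hh W M u = 12 * (5/4)^(W - x)" using Q hh_Q[of x] by simp
    ultimately show ?thesis unfolding e by (simp add: algebra_simps)
  qed
  ultimately show ?thesis by simp
qed

lemma vertex_ok:
  assumes u: "u < NN" "u \<noteq> 0"
  and geo: "\<forall>x<NN. x \<noteq> 0 \<longrightarrow> is_geodesic (G W M) x 0 (geo x)"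
  shows "(\<Sum>y<NN. gb_trans NN (G W M) (Xs W M) geo u y) = 1 \<and>
         (\<Sum>y<NN. gb_trans NN (G W M) (Xs W M) geo u y * hh W M y) \<le> hh W M u + 1"
proof (cases rule: vertex_cases[OF u(1), case_names sp0 splow spmid sptop T1first T1 T2 T3 T3last Q])
  case sp0 then show ?thesis using u by simp
next
  case splow show ?thesis by (rule case_splow[OF splow u geo])
next
  case spmid show ?thesis by (rule case_spmid[OF spmid u geo])
next
  case sptop show ?thesis by (rule case_sptop[OF sptop u geo])
next
  case T1first show ?thesis by (rule case_T1first[OF T1first u geo])
next
  case (T1 x) show ?thesis by (rule case_T1[OF T1 u geo])
next
  case (T2 x) show ?thesis by (rule case_T2[OF T2 u geo])
next
  case (T3 x) show ?thesis by (rule case_T3[OF T3 u geo])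
next
  case T3last show ?thesis by (rule case_T3last[OF T3last u geo])
next
  case (Q x) show ?thesis by (rule case_Q[OF Q u geo])
qed

lemma tail_nonneg: "gb_tail n E X geo a b t \<ge> 0"
  unfolding gb_tail_def by (auto intro!: sum_nonneg gb_surv_nonneg)

lemma main_W:
  assumes geo: "\<forall>x<NN. x \<noteq> 0 \<longrightarrow> is_geodesic (G W M) x 0 (geo x)"
  shows "ennreal (8 * (5/4)^W - 16) \<le> gb_expected_hitting NN (G W M) (Xs W M) geo W 0"
proof -
  have vo: "\<And>x. x < NN \<Longrightarrow> x \<noteq> 0 \<Longrightarrow> (\<Sum>y<NN. gb_trans NN (G W M) (Xs W M) geo x y) = 1 \<and>
         (\<Sum>y<NN. gb_trans NN (G W M) (Xs W M) geo x y * hh W M y) \<le> hh W M x + 1"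
    using vertex_ok[OF _ _ geo] by blast
  have "\<exists>T. hh W M 0 / 2 - hh W M W \<le> (\<Sum>t<T. gb_tail NN (G W M) (Xs W M) geo W 0 t)"
  proof (rule hitting_lower[where h="hh W M"])
    show "W < NN" "0 < NN" "W \<noteq> 0" using W6 by auto
    show "\<And>x. x < NN \<Longrightarrow> x \<noteq> 0 \<Longrightarrow> (\<Sum>y<NN. gb_trans NN (G W M) (Xs W M) geo x y) = 1"
      using vo by blast
    show "\<And>x. x < NN \<Longrightarrow> x \<noteq> 0 \<Longrightarrow> (\<Sum>y<NN. gb_trans NN (G W M) (Xs W M) geo x y * hh W M y) \<le> hh W M x + 1"
      using vo by blast
    show "\<And>y. y < NN \<Longrightarrow> hh W M y \<ge> 0" by (rule hh_nonneg)
  qed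
  then obtain T where T: "hh W M 0 / 2 - hh W M W \<le> (\<Sum>t<T. gb_tail NN (G W M) (Xs W M) geo W 0 t)" by blast
  have hh0: "hh W M 0 = 16 * (5/4)^W" by (simp add: hh_sp)
  have hhW: "hh W M W = 16" using MW by (simp add: hh_sp)
  have "ennreal (8 * (5/4)^W - 16) \<le> ennreal (\<Sum>t<T. gb_tail NN (G W M) (Xs W M) geo W 0 t)"
    using T unfolding hh0 hhW by (intro ennreal_leI) simp
  also have "\<dots> = (\<Sum>t<T. ennreal (gb_tail NN (G W M) (Xs W M) geo W 0 t))"
    by (rule sum_ennreal[symmetric]) (rule tail_nonneg)
  also have "\<dots> \<le> (\<Sum>t. ennreal (gb_tail NN (G W M) (Xs W M) geo W 0 t))"
    by (rule sum_le_suminf[OF summableI]) auto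
  finally show ?thesis unfolding gb_expected_hitting_def .
qed

end

lemma exp_bound_W:
  assumes "6 \<le> W"
  shows "exp (root 4 (real (W*W)) / 100) \<le> 8 * (5/4::real)^W - 16"
proof -
  have W1: "real W \<ge> 1" using assms by simp
  have "real (W*W) \<le> real W ^ 4"
  proof -
    have x1: "1 \<le> real W * real W" using mult_mono[OF W1 W1] by simp
    have "(real W * real W) * 1 \<le> (real W * real W) * (real W * real W)"
      by (rule mult_left_mono[OF x1]) simp
    then have "real W * real W \<le> (real W * real W) * (real W * real W)" by simp
    then show ?thesis by (simp add: power4_eq_xxxx mult.assoc)
  qed
  then have "root 4 (real (W*W)) \<le> root 4 (real W ^ 4)" by (subst real_root_le_iff) auto
  also have "\<dots> = real W" by (rule real_root_pos2) auto
  finally have r: "root 4 (real (W*W)) \<le> real W" .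
  have "exp (root 4 (real (W*W)) / 100) \<le> exp (real W * (1/100))" using r by simp
  also have "\<dots> = exp (1/100) ^ W" by (rule exp_of_nat_mult)
  also have "\<dots> \<le> (5/4::real) ^ W"
  proof (rule power_mono)
    have "exp (1/100::real) \<le> 1 + 2 * (1/100)" by (rule real_exp_bound_lemma) auto
    then show "exp (1/100::real) \<le> 5/4" by simp
  qed simp
  also have "\<dots> \<le> 8 * (5/4::real)^W - 16"
  proof -
    have "(5/4::real)^6 \<le> (5/4)^W" by (rule power_increasing[OF assms]) simp
    moreover have "(5/4::real)^6 = 15625/4096" by (simp add: power_divide)
    ultimately show ?thesis by simp
  qed
  finally show ?thesis .
qed

theorem theorem1p2:
  shows "\<exists>c C :: real. c > 0 \<and> C > 0 \<and>
    (\<forall>N. \<exists>n\<ge>N. \<exists>E a b X.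
       simple_graph n E \<and> connected_graph n E \<and>
       (\<forall>x<n. deg n E x \<le> 3) \<and> (\<exists>x<n. deg n E x = 3) \<and>
       a < n \<and> b < n \<and> X \<subseteq> {..<n} \<and> real (card X) \<le> C * sqrt (real n) \<and>
       (\<forall>geo. (\<forall>x<n. x \<noteq> b \<longrightarrow> is_geodesic E x b (geo x)) \<longrightarrow>
          ennreal (c * exp (root 4 (real n) / 100)) \<le> gb_expected_hitting n E X geo a b))"
proof (rule exI[of _ 1], rule exI[of _ 1], intro conjI allI)
  fix N :: nat
  define W where "W = max N 6"
  define M where "M = W*W - 4*W"
  have W6: "6 \<le> W" unfolding W_def by simp
  have WW: "6 * W \<le> W * W" using W6 by simp
  have MW: "W + 1 \<le> M" unfolding M_def using WW W6 by linarith
  have nn: "M + 4*W = W*W" unfolding M_def using WW W6 by linarith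
  have NW: "N \<le> W*W" unfolding W_def
    by (metis le_square max.cobounded1 order_trans)
  show "\<exists>n\<ge>N. \<exists>E a b X.
       simple_graph n E \<and> connected_graph n E \<and>
       (\<forall>x<n. deg n E x \<le> 3) \<and> (\<exists>x<n. deg n E x = 3) \<and>
       a < n \<and> b < n \<and> X \<subseteq> {..<n} \<and> real (card X) \<le> 1 * sqrt (real n) \<and>
       (\<forall>geo. (\<forall>x<n. x \<noteq> b \<longrightarrow> is_geodesic E x b (geo x)) \<longrightarrow>
          ennreal (1 * exp (root 4 (real n) / 100)) \<le> gb_expected_hitting n E X geo a b)"
  proof -
    have f1: "simple_graph (W*W) (G W M)" using simple[OF W6 MW] unfolding nn .
    have f2: "connected_graph (W*W) (G W M)" using connected[OF W6 MW] unfolding nn .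
    have f3: "\<forall>x<W*W. deg (W*W) (G W M) x \<le> 3" using deg_le3[OF W6 MW] unfolding nn by blast
    have f4: "\<exists>x<W*W. deg (W*W) (G W M) x = 3"
    proof -
      have "1 < W*W" using WW W6 by linarith
      then show ?thesis using deg_one[OF W6 MW] unfolding nn by blast
    qed
    have f5: "W < W*W" using W6 by simp
    have f6: "0 < W*W" using W6 by simp
    have f7: "Xs W M \<subseteq> {..<W*W}" unfolding Xs_def nn[symmetric] by auto
    have "card (Xs W M) = W - 1" unfolding Xs_def by simp
    then have f8: "real (card (Xs W M)) \<le> 1 * sqrt (real (W*W))" by simp
    have f9: "\<forall>geo. (\<forall>x<W*W. x \<noteq> 0 \<longrightarrow> is_geodesic (G W M) x 0 (geo x)) \<longrightarrow>
          ennreal (1 * exp (root 4 (real (W*W)) / 100)) \<le> gb_expected_hitting (W*W) (G W M) (Xs W M) geo W 0"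
    proof (intro allI impI)
      fix geo
      assume g: "\<forall>x<W*W. x \<noteq> 0 \<longrightarrow> is_geodesic (G W M) x 0 (geo x)"
      have "ennreal (exp (root 4 (real (W*W)) / 100)) \<le> ennreal (8 * (5/4)^W - 16)"
        using exp_bound_W[OF W6] by (intro ennreal_leI)
      also have "\<dots> \<le> gb_expected_hitting (W*W) (G W M) (Xs W M) geo W 0"
        using main_W[OF W6 MW, unfolded nn, OF g] .
      finally show "ennreal (1 * exp (root 4 (real (W*W)) / 100)) \<le> gb_expected_hitting (W*W) (G W M) (Xs W M) geo W 0"
        by simp
    qed
    show ?thesis
      apply (rule exI[of _ "W*W"])
      apply (rule conjI[OF NW])
      apply (rule exI[of _ "G W M"])
      apply (rule exI[of _ W])
      apply (rule exI[of _ 0])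
      apply (rule exI[of _ "Xs W M"])
      using f1 f2 f3 f4 f5 f6 f7 f8 f9 by blast
  qed
qed simp_all


end
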